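(* If $H$ is a hyperplane in $\mathbb{R}^n$ and $0<b<1$, the Brock set map $\diamond_{B_H}$ with parameter $b$ cannot be weakly approximated on the class $\mathcal K^n_n$ of convex bodies by finite compositions of polarizations with respect to hyperplanes parallel to $H$.
   Context: For $H=u^\perp+t_0u$ oriented by the unit vector $u$, the Brock set map with parameter $b\in[0,1]$ maps a convex body $K$ to the set obtained by translating orthogonally to $H$ each chord of $K$ orthogonal to $H$, with midpoint at height $t$ (i.e. $\langle\cdot,u\rangle=t$), so that its midpoint lies at height $(1-b)t_0+bt$. Set polarization with respect to an oriented hyperplane $G$ (closed halfspaces $G^\pm$, reflection $A^\dagger$): $(P_GA)\cap G^+=(A\cup A^\dagger)\cap G^+$, $(P_GA)\cap G^-=(A\cap A^\dagger)\cap G^-$. Weak approximability on $\mathcal E$ by maps in $\mathcal G$: for every $A\in\mathcal E$ there are $\diamond_{A,k}\in\mathcal G$ with $\|1_{\diamond_{A,k}A}-1_{\diamond A}\|_1\to0$. *)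

theory Defs
  imports "HOL-Analysis.Analysis"
begin

definition convex_body :: "'a::euclidean_space set \<Rightarrow> bool" where
  "convex_body K \<longleftrightarrow> compact K \<and> convex K \<and> interior K \<noteq> {}"

definition chord_heights :: "'a::euclidean_space \<Rightarrow> 'a set \<Rightarrow> 'a \<Rightarrow> real set" where
  "chord_heights u A y = {z \<bullet> u | z. z \<in> A \<and> z - (z \<bullet> u) *\<^sub>R u = y - (y \<bullet> u) *\<^sub>R u}"

definition chord_mid :: "'a::euclidean_space \<Rightarrow> 'a set \<Rightarrow> 'a \<Rightarrow> real" where
  "chord_mid u A y = (Sup (chord_heights u A y) + Inf (chord_heights u A y)) / 2"

text \<open>Brock set map for H = u-perp + t0 u (u a unit vector) with parameter b: each chord
  orthogonal to H with midpoint at height t is translated along u so that its midpoint lies at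
  height (1-b) t0 + b t.\<close>
definition brock :: "'a::euclidean_space \<Rightarrow> real \<Rightarrow> real \<Rightarrow> 'a set \<Rightarrow> 'a set" where
  "brock u t0 b A = {y + ((1 - b) * (t0 - chord_mid u A y)) *\<^sub>R u | y. y \<in> A}"

text \<open>Oriented hyperplane G = {x. x \<bullet> v = s}, oriented by the unit vector v:
  closed halfspaces G+ = {x \<bullet> v \<ge> s}, G- = {x \<bullet> v \<le> s}; reflection in G.\<close>
definition refl_hp :: "'a::euclidean_space \<Rightarrow> real \<Rightarrow> 'a \<Rightarrow> 'a" where
  "refl_hp v s x = x - (2 * (x \<bullet> v - s)) *\<^sub>R v"

definition polarization :: "'a::euclidean_space \<Rightarrow> real \<Rightarrow> 'a set \<Rightarrow> 'a set" where
  "polarization v s A =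
     ((A \<union> refl_hp v s ` A) \<inter> {x. x \<bullet> v \<ge> s}) \<union>
     ((A \<inter> refl_hp v s ` A) \<inter> {x. x \<bullet> v \<le> s})"

fun polar_comp :: "('a::euclidean_space \<times> real) list \<Rightarrow> 'a set \<Rightarrow> 'a set" where
  "polar_comp [] A = A"
| "polar_comp ((v, s) # hs) A = polarization v s (polar_comp hs A)"

definition parallel_polar_comps :: "'a::euclidean_space \<Rightarrow> ('a set \<Rightarrow> 'a set) set" where
  "parallel_polar_comps u =
     {polar_comp hs | hs. \<forall>(v, s) \<in> set hs. v = u \<or> v = - u}"

definition ind_L1_dist :: "'a::euclidean_space set \<Rightarrow> 'a set \<Rightarrow> ennreal" where
  "ind_L1_dist A B = (\<integral>\<^sup>+ x. ennreal \<bar>indicator A x - indicator B x\<bar> \<partial>lebesgue)"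

definition weakly_approximable ::
  "'a::euclidean_space set set \<Rightarrow> ('a set \<Rightarrow> 'a set) set \<Rightarrow> ('a set \<Rightarrow> 'a set) \<Rightarrow> bool" where
  "weakly_approximable E G D \<longleftrightarrow>
     (\<forall>A \<in> E. \<exists>F :: nat \<Rightarrow> 'a set \<Rightarrow> 'a set. (\<forall>k. F k \<in> G) \<and>
        (\<lambda>k. ind_L1_dist (F k A) (D A)) \<longlonglongrightarrow> 0)"

end

theory Submission
  imports Defs
begin

definition SS :: "'a::euclidean_space \<Rightarrow> 'a \<Rightarrow> (real \<Rightarrow> real) \<Rightarrow> 'a set" where
  "SS u w c = {x. norm (x - (x \<bullet> u) *\<^sub>R u) \<le> 1 \<and> \<bar>x \<bullet> u - c (x \<bullet> w)\<bar> \<le> 1}"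

lemma refl_facts:
  fixes u w :: "'a::euclidean_space"
  assumes u: "norm u = 1" and wu: "w \<bullet> u = 0"
  shows "refl_hp u s (refl_hp u s x) = x"
    "refl_hp u s x \<bullet> u = 2 * s - x \<bullet> u"
    "refl_hp u s x \<bullet> w = x \<bullet> w"
    "refl_hp u s x - (refl_hp u s x \<bullet> u) *\<^sub>R u = x - (x \<bullet> u) *\<^sub>R u"
proof -
  have uu: "u \<bullet> u = 1" using u by (simp add: norm_eq_1)
  show 2: "refl_hp u s x \<bullet> u = 2 * s - x \<bullet> u"
    by (simp add: refl_hp_def inner_diff_left uu)
  show "refl_hp u s x \<bullet> w = x \<bullet> w"
    using wu by (simp add: refl_hp_def inner_diff_right inner_commute)
  show "refl_hp u s (refl_hp u s x) = x"
    unfolding refl_hp_def using uu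
    by (simp add: inner_diff_left algebra_simps)
  show "refl_hp u s x - (refl_hp u s x \<bullet> u) *\<^sub>R u = x - (x \<bullet> u) *\<^sub>R u"
    unfolding 2 by (simp add: refl_hp_def algebra_simps) (simp add: scaleR_add_left[symmetric])
qed

lemma mem_refl_image:
  assumes "\<And>x. f (f x) = x" shows "x \<in> f ` A \<longleftrightarrow> f x \<in> A"
  by (metis assms image_iff)

lemma pol_mem:
  assumes "\<And>x. refl_hp v s (refl_hp v s x) = x"
  shows "x \<in> polarization v s A \<longleftrightarrow> (s \<le> x \<bullet> v \<and> (x \<in> A \<or> refl_hp v s x \<in> A)) \<or> (x \<bullet> v \<le> s \<and> x \<in> A \<and> refl_hp v s x \<in> A)"
  unfolding polarization_def using mem_refl_image[of "refl_hp v s", OF assms] by auto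

lemma pol_u:
  fixes u w :: "'a::euclidean_space"
  assumes u: "norm u = 1" and wu: "w \<bullet> u = 0"
  shows "polarization u s (SS u w c) = SS u w (\<lambda>m. s + \<bar>c m - s\<bar>)"
proof (intro set_eqI)
  fix x
  note R = refl_facts[OF u wu, of s]
  show "x \<in> polarization u s (SS u w c) \<longleftrightarrow> x \<in> SS u w (\<lambda>m. s + \<bar>c m - s\<bar>)"
    unfolding pol_mem[OF R(1)] unfolding SS_def mem_Collect_eq R(4) unfolding R(2,3)
    by (cases "norm (x - (x \<bullet> u) *\<^sub>R u) \<le> 1") (auto simp: abs_if split: if_splits)
qed

lemma pol_mu:
  fixes u w :: "'a::euclidean_space"
  assumes u: "norm u = 1" and wu: "w \<bullet> u = 0"
  shows "polarization (-u) s (SS u w c) = SS u w (\<lambda>m. - s - \<bar>c m + s\<bar>)"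
proof (intro set_eqI)
  fix x
  have u': "norm (-u) = 1" using u by simp
  have wu': "w \<bullet> -u = 0" using wu by simp
  note R = refl_facts[OF u' wu', of s]
  have p: "y - (y \<bullet> -u) *\<^sub>R -u = y - (y \<bullet> u) *\<^sub>R u" for y :: 'a by simp
  have r2': "refl_hp (-u) s x \<bullet> -u = 2 * s - x \<bullet> -u" by (rule R(2))
  have r2: "refl_hp (-u) s x \<bullet> u = - 2 * s - x \<bullet> u" using r2' unfolding inner_minus_right by linarith
  have r4: "refl_hp (-u) s x - (refl_hp (-u) s x \<bullet> u) *\<^sub>R u = x - (x \<bullet> u) *\<^sub>R u"
    using R(4) p by metis
  show "x \<in> polarization (-u) s (SS u w c) \<longleftrightarrow> x \<in> SS u w (\<lambda>m. - s - \<bar>c m + s\<bar>)"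
    unfolding pol_mem[OF R(1)] unfolding SS_def mem_Collect_eq r4 unfolding r2 R(3) inner_minus_right
    by (cases "norm (x - (x \<bullet> u) *\<^sub>R u) \<le> 1") (auto simp: abs_if split: if_splits)
qed

fun Gf :: "'a::euclidean_space \<Rightarrow> ('a \<times> real) list \<Rightarrow> real \<Rightarrow> real" where
  "Gf u [] m = m"
| "Gf u ((v, s) # hs) m = (if v = u then s + \<bar>Gf u hs m - s\<bar> else - s - \<bar>Gf u hs m + s\<bar>)"

lemma Gf_cont: "continuous_on UNIV (Gf u hs)"
proof (induction hs)
  case Nil
  then show ?case by (simp add: continuous_on_id')
next
  case (Cons a hs)
  obtain v s where a: "a = (v, s)" by fastforce
  show ?case unfolding a
    using Cons.IH by (cases "v = u") (auto intro!: continuous_intros)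
qed

lemma Gf_lip: "\<bar>Gf u hs x - Gf u hs y\<bar> \<le> \<bar>x - y\<bar>"
proof (induction hs)
  case Nil
  then show ?case by simp
next
  case (Cons a hs)
  obtain v s where a: "a = (v, s)" by fastforce
  show ?case unfolding a
    using Cons.IH by (cases "v = u") (auto simp: abs_if split: if_splits)
qed

definition fib :: "(real \<Rightarrow> real) \<Rightarrow> real \<Rightarrow> bool" where
  "fib g r \<longleftrightarrow> (\<forall>x\<in>{-1/2..1/2}. \<forall>y\<in>{-1/2..1/2}. g x = g y \<longrightarrow> \<bar>x - y\<bar> < r)"

lemma crossB:
  fixes g :: "real \<Rightarrow> real"
  assumes cont: "continuous_on UNIV g" and fb: "fib g r" and r: "0 < r"
    and x0: "-1/2 + r \<le> x0" "x0 \<le> 1/2 - r"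
    and mn: "\<forall>y\<in>{-1/2..1/2}. g x0 \<le> g y"
  shows False
proof -
  define p where "p = x0 - r"
  define q where "q = x0 + r"
  have pJ: "p \<in> {-1/2..1/2}" and qJ: "q \<in> {-1/2..1/2}" and x0J: "x0 \<in> {-1/2..1/2}"
    using x0 r by (auto simp: p_def q_def)
  have gp: "g x0 \<le> g p" and gq: "g x0 \<le> g q" using mn pJ qJ by auto
  have c1: "continuous_on {x0..q} g" and c2: "continuous_on {p..x0} g"
    using cont by (auto intro: continuous_on_subset)
  show False
  proof (cases "g p \<le> g q")
    case True
    obtain y where y: "x0 \<le> y" "y \<le> q" "g y = g p"
      using IVT'[of g x0 "g p" q, OF gp True _ c1] r by (auto simp: q_def)
    have "y \<in> {-1/2..1/2}" using y x0J qJ by auto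
    then have "\<bar>y - p\<bar> < r" using fb pJ y(3) unfolding fib_def by blast
    then show False using y(1) by (simp add: p_def)
  next
    case False
    then have gqp: "g q \<le> g p" by simp
    obtain y where y: "p \<le> y" "y \<le> x0" "g y = g q"
      using IVT2'[of g x0 "g q" p, OF gq gqp _ c2] r by (auto simp: p_def)
    have "y \<in> {-1/2..1/2}" using y x0J pJ by auto
    then have "\<bar>y - q\<bar> < r" using fb qJ y(3) unfolding fib_def by blast
    then show False using y(2) by (simp add: q_def)
  qed
qed

lemma fib_neg: "fib g r \<Longrightarrow> fib (\<lambda>x. - g x) r"
  unfolding fib_def by auto

lemma affineA:
  assumes r: "0 < r"
  shows "fib (Gf u hs) r \<Longrightarrow> \<exists>\<sigma> c. (\<sigma> = 1 \<or> \<sigma> = -1) \<and> (\<forall>x\<in>{-1/2+r..1/2-r}. Gf u hs x = \<sigma> * x + c)"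
proof (induction hs)
  case Nil
  then show ?case by (intro exI[of _ 1] exI[of _ 0]) auto
next
  case (Cons a hs)
  obtain v s where a: "a = (v, s)" by fastforce
  have "fib (Gf u hs) r"
    using Cons.prems unfolding fib_def a by (metis Gf.simps(2))
  then obtain \<sigma> c where sg: "\<sigma> = 1 \<or> \<sigma> = -1" and af: "\<forall>x\<in>{-1/2+r..1/2-r}. Gf u hs x = \<sigma> * x + c"
    using Cons.IH by blast
  have ss: "\<sigma> * \<sigma> = 1" using sg by auto
  show ?case
  proof (cases "v = u")
    case True
    define x0 where "x0 = \<sigma> * (s - c)"
    have sx0: "\<sigma> * x0 = s - c" unfolding x0_def by (metis mult.assoc mult_1 ss)
    have lin: "Gf u hs x - s = \<sigma> * (x - x0)" if "x \<in> {-1/2+r..1/2-r}" for x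
      using af that sx0 by (simp add: right_diff_distrib)
    have ev: "Gf u (a # hs) x = s + \<bar>Gf u hs x - s\<bar>" for x unfolding a using True by simp
    have ab: "\<bar>\<sigma> * y\<bar> = \<bar>y\<bar>" for y using sg by auto
    show ?thesis
    proof (cases "x0 \<in> {-1/2+r..1/2-r}")
      case True
      have "Gf u (a # hs) x0 = s" using lin[OF True] ev by simp
      moreover have "\<forall>y\<in>{-1/2..1/2}. s \<le> Gf u (a # hs) y" using ev by simp
      ultimately show ?thesis
        using crossB[OF Gf_cont Cons.prems r, of x0] True by auto
    next
      case False
      show ?thesis
      proof (cases "x0 < -1/2+r")
        case True
        show ?thesis
          by (intro exI[of _ 1] exI[of _ "s - x0"]) (use True lin ev ab in auto)
      next
        case False
        then have "x0 > 1/2 - r" using \<open>x0 \<notin> _\<close> by auto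
        then show ?thesis
          by (intro exI[of _ "-1"] exI[of _ "s + x0"]) (use lin ev ab in auto)
      qed
    qed
  next
    case False
    define x0 where "x0 = \<sigma> * (- s - c)"
    have sx0: "\<sigma> * x0 = - s - c" unfolding x0_def by (metis mult.assoc mult_1 ss)
    have lin: "Gf u hs x + s = \<sigma> * (x - x0)" if "x \<in> {-1/2+r..1/2-r}" for x
      using af that sx0 by (simp add: right_diff_distrib)
    have ev: "Gf u (a # hs) x = - s - \<bar>Gf u hs x + s\<bar>" for x unfolding a using False by simp
    have ab: "\<bar>\<sigma> * y\<bar> = \<bar>y\<bar>" for y using sg by auto
    show ?thesis
    proof (cases "x0 \<in> {-1/2+r..1/2-r}")
      case True
      have "- Gf u (a # hs) x0 = s" using lin[OF True] ev by simp
      moreover have "\<forall>y\<in>{-1/2..1/2}. s \<le> - Gf u (a # hs) y" using ev by simp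
      moreover have "continuous_on UNIV (\<lambda>x. - Gf u (a # hs) x)"
        using Gf_cont by (auto intro: continuous_intros)
      ultimately show ?thesis
        using crossB[OF _ fib_neg[OF Cons.prems] r, of x0] True by auto
    next
      case False
      show ?thesis
      proof (cases "x0 < -1/2+r")
        case True
        show ?thesis
          by (intro exI[of _ "-1"] exI[of _ "- s + x0"]) (use True lin ev ab in auto)
      next
        case False
        then have "x0 > 1/2 - r" using \<open>x0 \<notin> _\<close> by auto
        then show ?thesis
          by (intro exI[of _ 1] exI[of _ "- s - x0"]) (use lin ev ab in auto)
      qed
    qed
  qed
qed

lemma oneD:
  assumes b: "0 < b" "b < 1"
  shows "\<exists>m\<in>{-1/2..1/2}. b * (1 - b) / 8 \<le> \<bar>Gf u hs m - ((1 - b) * t0 + b * m)\<bar>"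
proof (rule ccontr)
  define e where "e = b * (1 - b) / 8"
  define r where "r = (1 - b) / 4"
  define G where "G = Gf u hs"
  define h where "h = (\<lambda>m::real. (1 - b) * t0 + b * m)"
  assume "\<not> ?thesis"
  then have cl: "\<forall>m\<in>{-1/2..1/2}. \<bar>G m - h m\<bar> < e"
    unfolding e_def G_def h_def by (auto simp: not_le)
  have r0: "0 < r" using b by (simp add: r_def)
  have "fib G r"
    unfolding fib_def
  proof (intro ballI impI)
    fix x y :: real assume x: "x \<in> {-1/2..1/2}" and y: "y \<in> {-1/2..1/2}" and eq: "G x = G y"
    have "\<bar>G x - h x\<bar> < e" "\<bar>G y - h y\<bar> < e" using cl x y by auto
    then have "\<bar>h x - h y\<bar> < 2 * e" using eq by arith
    moreover have "h x - h y = b * (x - y)" by (simp add: h_def algebra_simps)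
    ultimately have "b * \<bar>x - y\<bar> < b * r"
      using b unfolding e_def r_def by (simp add: abs_mult)
    then show "\<bar>x - y\<bar> < r" using b by simp
  qed
  then obtain \<sigma> c where sg: "\<sigma> = 1 \<or> \<sigma> = -1" and af: "\<forall>x\<in>{-1/2+r..1/2-r}. G x = \<sigma> * x + c"
    using affineA[OF r0] unfolding G_def by blast
  define lo where "lo = -1/2 + r"
  define hi where "hi = 1/2 - r"
  have lohi: "lo \<le> hi" "-1/2 \<le> lo" "hi \<le> 1/2" using b by (auto simp: lo_def hi_def r_def)
  have "\<bar>G lo - h lo\<bar> < e" "\<bar>G hi - h hi\<bar> < e" using cl lohi by auto
  moreover have "G lo = \<sigma> * lo + c" "G hi = \<sigma> * hi + c" using af lohi by (auto simp: lo_def hi_def)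
  ultimately have "\<bar>(\<sigma> - b) * (hi - lo)\<bar> < 2 * e"
    unfolding h_def by (simp add: algebra_simps)
  moreover have "hi - lo = (1 + b) / 2" by (simp add: hi_def lo_def r_def field_simps)
  ultimately have "\<bar>(\<sigma> - b) * (1 + b)\<bar> < b * (1 - b) / 2" by (simp add: e_def)
  moreover have "b * (1 - b) / 2 \<le> \<bar>(\<sigma> - b) * (1 + b)\<bar>"
  proof -
    have "b * (1 - b) / 2 \<le> (1 - b) * (1 + b)" using b by (simp add: mult_right_mono)
    also have "(1 - b) * (1 + b) \<le> \<bar>(\<sigma> - b) * (1 + b)\<bar>"
      using sg b by (auto simp: abs_mult)
    finally show ?thesis .
  qed
  ultimately show False by simp
qed


lemma polar_comp_SS:
  fixes u w :: "'a::euclidean_space"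
  assumes u: "norm u = 1" and wu: "w \<bullet> u = 0"
  shows "(\<forall>(v, s)\<in>set hs. v = u \<or> v = - u) \<Longrightarrow> polar_comp hs (SS u w c) = SS u w (\<lambda>m. Gf u hs (c m))"
proof (induction hs)
  case Nil
  then show ?case by simp
next
  case (Cons a hs)
  obtain v s where a: "a = (v, s)" by fastforce
  have IH: "polar_comp hs (SS u w c) = SS u w (\<lambda>m. Gf u hs (c m))" using Cons by auto
  have v: "v = u \<or> v = - u" using Cons.prems a by auto
  show ?case
  proof (cases "v = u")
    case True
    then show ?thesis unfolding a using pol_u[OF u wu] IH by simp
  next
    case False
    then have "v = - u" using v by simp
    then show ?thesis unfolding a using pol_mu[OF u wu] IH False by simp
  qed
qed

lemma shift_facts:
  fixes u w z :: "'a::euclidean_space"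
  assumes u: "norm u = 1" and wu: "w \<bullet> u = 0"
  shows "(z + a *\<^sub>R u) \<bullet> w = z \<bullet> w" "(z + a *\<^sub>R u) \<bullet> u = z \<bullet> u + a"
    "(z + a *\<^sub>R u) - ((z + a *\<^sub>R u) \<bullet> u) *\<^sub>R u = z - (z \<bullet> u) *\<^sub>R u"
proof -
  have uu: "u \<bullet> u = 1" using u by (simp add: norm_eq_1)
  have wu': "u \<bullet> w = 0" using wu by (simp add: inner_commute)
  show "(z + a *\<^sub>R u) \<bullet> w = z \<bullet> w" using wu' by (simp add: inner_add_left)
  show 2: "(z + a *\<^sub>R u) \<bullet> u = z \<bullet> u + a" using uu by (simp add: inner_add_left)
  show "(z + a *\<^sub>R u) - ((z + a *\<^sub>R u) \<bullet> u) *\<^sub>R u = z - (z \<bullet> u) *\<^sub>R u"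
    unfolding 2 by (simp add: algebra_simps)
qed

lemma perp_inner:
  fixes u w z :: "'a::euclidean_space"
  assumes u: "norm u = 1" and wu: "w \<bullet> u = 0"
  shows "(z - (z \<bullet> u) *\<^sub>R u) \<bullet> u = 0" "(z - (z \<bullet> u) *\<^sub>R u) \<bullet> w = z \<bullet> w"
proof -
  have uu: "u \<bullet> u = 1" using u by (simp add: norm_eq_1)
  show "(z - (z \<bullet> u) *\<^sub>R u) \<bullet> u = 0" using uu by (simp add: inner_diff_left)
  have wu': "u \<bullet> w = 0" using wu by (simp add: inner_commute)
  show "(z - (z \<bullet> u) *\<^sub>R u) \<bullet> w = z \<bullet> w" using wu' by (simp add: inner_diff_left)
qed

lemma chord_mid_SS:
  fixes u w y :: "'a::euclidean_space"
  assumes u: "norm u = 1" and wu: "w \<bullet> u = 0" and y: "y \<in> SS u w (\<lambda>m. m)"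
  shows "chord_mid u (SS u w (\<lambda>m. m)) y = y \<bullet> w"
proof -
  let ?p = "\<lambda>z::'a. z - (z \<bullet> u) *\<^sub>R u"
  have ny: "norm (?p y) \<le> 1" using y by (simp add: SS_def)
  have "chord_heights u (SS u w (\<lambda>m. m)) y = {y \<bullet> w - 1 .. y \<bullet> w + 1}"
  proof (intro set_eqI iffI)
    fix t assume "t \<in> chord_heights u (SS u w (\<lambda>m. m)) y"
    then obtain z where t: "t = z \<bullet> u" and z: "z \<in> SS u w (\<lambda>m. m)" and pz: "?p z = ?p y"
      unfolding chord_heights_def by blast
    have "z \<bullet> w = y \<bullet> w" using perp_inner(2)[OF u wu, of z] perp_inner(2)[OF u wu, of y] pz by simp
    then show "t \<in> {y \<bullet> w - 1 .. y \<bullet> w + 1}" using z t by (auto simp: SS_def abs_le_iff)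
  next
    fix t assume t: "t \<in> {y \<bullet> w - 1 .. y \<bullet> w + 1}"
    define z where "z = ?p y + t *\<^sub>R u"
    have zu: "z \<bullet> u = t" using shift_facts(2)[OF u wu, of "?p y" t] perp_inner(1)[OF u wu, of y]
      by (simp add: z_def)
    have zw: "z \<bullet> w = y \<bullet> w" using shift_facts(1)[OF u wu, of "?p y" t] perp_inner(2)[OF u wu, of y]
      by (simp add: z_def)
    have pz: "?p z = ?p y" using shift_facts(3)[OF u wu, of "?p y" t] perp_inner(1)[OF u wu, of y]
      by (simp add: z_def)
    have "z \<in> SS u w (\<lambda>m. m)" using pz zu zw ny t by (auto simp: SS_def abs_le_iff)
    then show "t \<in> chord_heights u (SS u w (\<lambda>m. m)) y"
      unfolding chord_heights_def using zu pz by auto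
  qed
  then show ?thesis unfolding chord_mid_def by simp
qed

lemma brock_SS:
  fixes u w :: "'a::euclidean_space"
  assumes u: "norm u = 1" and wu: "w \<bullet> u = 0"
  shows "brock u t0 b (SS u w (\<lambda>m. m)) = SS u w (\<lambda>m. (1 - b) * t0 + b * m)"
proof (intro set_eqI iffI)
  fix x assume "x \<in> brock u t0 b (SS u w (\<lambda>m. m))"
  then obtain y where x: "x = y + ((1 - b) * (t0 - y \<bullet> w)) *\<^sub>R u" and y: "y \<in> SS u w (\<lambda>m. m)"
    unfolding brock_def using chord_mid_SS[OF u wu] by auto
  note F = shift_facts[OF u wu, of y "(1 - b) * (t0 - y \<bullet> w)"]
  show "x \<in> SS u w (\<lambda>m. (1 - b) * t0 + b * m)"
    using y unfolding x SS_def mem_Collect_eq F by (simp add: algebra_simps)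
next
  fix x assume x: "x \<in> SS u w (\<lambda>m. (1 - b) * t0 + b * m)"
  define y where "y = x + (- ((1 - b) * (t0 - x \<bullet> w))) *\<^sub>R u"
  note F = shift_facts[OF u wu, of x "- ((1 - b) * (t0 - x \<bullet> w))"]
  have yw: "y \<bullet> w = x \<bullet> w" using F by (simp add: y_def)
  have y: "y \<in> SS u w (\<lambda>m. m)"
    using x unfolding y_def SS_def mem_Collect_eq F by (simp add: algebra_simps)
  have "x = y + ((1 - b) * (t0 - chord_mid u (SS u w (\<lambda>m. m)) y)) *\<^sub>R u"
    unfolding chord_mid_SS[OF u wu y] yw by (simp add: y_def)
  then show "x \<in> brock u t0 b (SS u w (\<lambda>m. m))"
    unfolding brock_def using y by blast
qed


lemma perp_le:
  fixes u z :: "'a::euclidean_space"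
  assumes u: "norm u = 1"
  shows "norm (z - (z \<bullet> u) *\<^sub>R u) \<le> norm z"
proof -
  have uu: "u \<bullet> u = 1" using u by (simp add: norm_eq_1)
  define p where "p = z - (z \<bullet> u) *\<^sub>R u"
  have pu: "p \<bullet> ((z \<bullet> u) *\<^sub>R u) = 0" using uu by (simp add: p_def inner_diff_left)
  have "z = p + (z \<bullet> u) *\<^sub>R u" by (simp add: p_def)
  then have "(norm z)\<^sup>2 = (norm p)\<^sup>2 + (norm ((z \<bullet> u) *\<^sub>R u))\<^sup>2"
    using norm_add_Pythagorean[of p "(z \<bullet> u) *\<^sub>R u"] pu by (simp add: orthogonal_def)
  then have "(norm p)\<^sup>2 \<le> (norm z)\<^sup>2" by simp
  then show ?thesis unfolding p_def[symmetric] by (rule power2_le_imp_le) simp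
qed

lemma inner_le_norm:
  fixes w z :: "'a::euclidean_space"
  assumes "norm w = 1" shows "\<bar>z \<bullet> w\<bar> \<le> norm z"
  using Cauchy_Schwarz_ineq2[of z w] assms by simp

lemma convex_body_SS:
  fixes u w :: "'a::euclidean_space"
  assumes u: "norm u = 1" and w: "norm w = 1" and wu: "w \<bullet> u = 0"
  shows "convex_body (SS u w (\<lambda>m. m))"
proof -
  let ?S = "SS u w (\<lambda>m. m)"
  let ?p = "\<lambda>z::'a. z - (z \<bullet> u) *\<^sub>R u"
  have cvx: "convex ?S"
    unfolding convex_def
  proof (intro ballI allI impI)
    fix x y :: 'a and a c :: real
    assume x: "x \<in> ?S" and y: "y \<in> ?S" and a: "0 \<le> a" and c: "0 \<le> c" and ac: "a + c = 1"
    have pl: "?p (a *\<^sub>R x + c *\<^sub>R y) = a *\<^sub>R ?p x + c *\<^sub>R ?p y"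
      by (simp add: algebra_simps inner_add_left)
    have "norm (a *\<^sub>R ?p x + c *\<^sub>R ?p y) \<le> a * norm (?p x) + c * norm (?p y)"
      using norm_triangle_ineq[of "a *\<^sub>R ?p x" "c *\<^sub>R ?p y"] a c by simp
    also have "\<dots> \<le> a * 1 + c * 1"
      using x y a c by (intro add_mono mult_left_mono) (auto simp: SS_def)
    finally have n: "norm (?p (a *\<^sub>R x + c *\<^sub>R y)) \<le> 1" using pl ac by simp
    have e: "(a *\<^sub>R x + c *\<^sub>R y) \<bullet> u - (a *\<^sub>R x + c *\<^sub>R y) \<bullet> w
        = a * (x \<bullet> u - x \<bullet> w) + c * (y \<bullet> u - y \<bullet> w)"
      by (simp add: inner_add_left algebra_simps)
    have "\<bar>a * (x \<bullet> u - x \<bullet> w) + c * (y \<bullet> u - y \<bullet> w)\<bar> \<le> a * 1 + c * 1"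
    proof -
      have "\<bar>a * (x \<bullet> u - x \<bullet> w)\<bar> \<le> a * 1"
        using x a by (auto simp: SS_def abs_mult mult_left_le)
      moreover have "\<bar>c * (y \<bullet> u - y \<bullet> w)\<bar> \<le> c * 1"
        using y c by (auto simp: SS_def abs_mult mult_left_le)
      ultimately show ?thesis by linarith
    qed
    then show "a *\<^sub>R x + c *\<^sub>R y \<in> ?S"
      using n e ac by (simp add: SS_def)
  qed
  have cl: "closed ?S"
    unfolding SS_def
    by (intro closed_Collect_conj closed_Collect_le continuous_intros)
  have bd: "bounded ?S"
  proof (rule bounded_subset[OF bounded_cball[of 0 3]])
    show "?S \<subseteq> cball 0 3"
    proof
      fix x assume x: "x \<in> ?S"
      have n: "norm (?p x) \<le> 1" and d: "\<bar>x \<bullet> u - x \<bullet> w\<bar> \<le> 1" using x by (auto simp: SS_def)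
      have "\<bar>?p x \<bullet> w\<bar> \<le> norm (?p x)" by (rule inner_le_norm[OF w])
      then have xw: "\<bar>x \<bullet> w\<bar> \<le> 1" using perp_inner(2)[OF u wu, of x] n by simp
      have "norm x = norm (?p x + (x \<bullet> u) *\<^sub>R u)" by simp
      also have "\<dots> \<le> norm (?p x) + norm ((x \<bullet> u) *\<^sub>R u)" by (rule norm_triangle_ineq)
      also have "\<dots> = norm (?p x) + \<bar>x \<bullet> u\<bar>" using u by simp
      finally have "norm x \<le> 3" using n d xw by linarith
      then show "x \<in> cball 0 3" by simp
    qed
  qed
  have "ball 0 (1/3) \<subseteq> ?S"
  proof
    fix x :: 'a assume "x \<in> ball 0 (1/3)"
    then have nx: "norm x < 1/3" by simp
    have "norm (?p x) \<le> norm x" by (rule perp_le[OF u])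
    moreover have "\<bar>x \<bullet> u\<bar> \<le> norm x" "\<bar>x \<bullet> w\<bar> \<le> norm x"
      using inner_le_norm[OF u] inner_le_norm[OF w] by auto
    ultimately show "x \<in> ?S" using nx by (simp add: SS_def abs_le_iff abs_le_iff) linarith?
  qed
  then have "0 \<in> interior ?S"
    using interior_maximal[of "ball 0 (1/3)" ?S] by auto
  then show ?thesis
    unfolding convex_body_def using cvx cl bd compact_eq_bounded_closed by blast
qed


lemma ball_sub:
  fixes u w :: "'a::euclidean_space" and G h :: "real \<Rightarrow> real"
  assumes u: "norm u = 1" and w: "norm w = 1" and wu: "w \<bullet> u = 0"
    and m: "\<bar>m\<bar> \<le> 1/2" and e: "0 < e" "e \<le> 1" and gap: "e \<le> \<bar>G m - h m\<bar>"
    and LG: "\<And>x y. \<bar>G x - G y\<bar> \<le> \<bar>x - y\<bar>" and Lh: "\<And>x y. \<bar>h x - h y\<bar> \<le> \<bar>x - y\<bar>"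
  shows "\<exists>p. ball p (e/4) \<subseteq> SS u w h - SS u w G"
proof -
  let ?p = "\<lambda>z::'a. z - (z \<bullet> u) *\<^sub>R u"
  have ww: "w \<bullet> w = 1" using w by (simp add: norm_eq_1)
  have wu': "u \<bullet> w = 0" using wu by (simp add: inner_commute)
  define a where "a = (if h m \<le> G m then h m - 1 + e/2 else h m + 1 - e/2)"
  define p where "p = m *\<^sub>R w + a *\<^sub>R u"
  have mwu: "(m *\<^sub>R w) \<bullet> u = 0" using wu by simp
  have pw: "p \<bullet> w = m" using shift_facts(1)[OF u wu, of "m *\<^sub>R w" a] ww by (simp add: p_def)
  have pu: "p \<bullet> u = a" using shift_facts(2)[OF u wu, of "m *\<^sub>R w" a] mwu by (simp add: p_def)
  have pp: "?p p = m *\<^sub>R w" using shift_facts(3)[OF u wu, of "m *\<^sub>R w" a] mwu by (simp add: p_def)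
  show ?thesis
  proof (intro exI subsetI)
    fix x assume "x \<in> ball p (e/4)"
    then have nd: "norm (x - p) < e/4" by (simp add: dist_norm norm_minus_commute)
    define d where "d = x - p"
    have xw: "\<bar>x \<bullet> w - m\<bar> \<le> norm d"
      using inner_le_norm[OF w, of d] pw by (simp add: d_def inner_diff_left)
    have xu: "\<bar>x \<bullet> u - a\<bar> \<le> norm d"
      using inner_le_norm[OF u, of d] pu by (simp add: d_def inner_diff_left)
    have "?p x = ?p p + ?p d" by (simp add: d_def algebra_simps inner_diff_left)
    then have "norm (?p x) \<le> norm (?p p) + norm (?p d)" by (simp add: norm_triangle_ineq)
    moreover have "norm (?p d) \<le> norm d" by (rule perp_le[OF u])
    moreover have "norm (?p p) = \<bar>m\<bar>" using pp w by simp
    ultimately have np: "norm (?p x) \<le> 1" using m nd e by (simp add: d_def)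
    have g1: "\<bar>G (x \<bullet> w) - G m\<bar> \<le> norm d" using LG[of "x \<bullet> w" m] xw by linarith
    have h1: "\<bar>h (x \<bullet> w) - h m\<bar> \<le> norm d" using Lh[of "x \<bullet> w" m] xw by linarith
    have ndl: "norm d < e / 4" using nd by (simp add: d_def)
    have "\<bar>x \<bullet> u - h (x \<bullet> w)\<bar> \<le> 1 \<and> \<not> \<bar>x \<bullet> u - G (x \<bullet> w)\<bar> \<le> 1"
    proof (cases "h m \<le> G m")
      case True
      then have "a = h m - 1 + e/2" by (simp add: a_def)
      moreover have "G m \<ge> h m + e" using gap True by linarith
      ultimately show ?thesis using g1 h1 xu ndl e unfolding abs_le_iff by linarith
    next
      case False
      then have "a = h m + 1 - e/2" by (simp add: a_def)
      moreover have "G m \<le> h m - e" using gap False by linarith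
      ultimately show ?thesis using g1 h1 xu ndl e unfolding abs_le_iff by linarith
    qed
    then show "x \<in> SS u w h - SS u w G" using np by (simp add: SS_def)
  qed
qed

theorem corollary6p8:
  fixes u :: "'a::euclidean_space" and t0 b :: real
  assumes "DIM('a) \<ge> 2"
    and "norm u = 1"
    and "0 < b" and "b < 1"
  shows "\<not> weakly_approximable {K. convex_body K} (parallel_polar_comps u) (brock u t0 b)"
proof
  assume wa: "weakly_approximable {K. convex_body K} (parallel_polar_comps u) (brock u t0 b)"
  note u = assms(2)
  obtain y0 :: 'a where y0: "y0 \<noteq> 0" "orthogonal u y0"
    using orthogonal_to_vector_exists[OF assms(1)] by blast
  define w where "w = (1 / norm y0) *\<^sub>R y0"
  have w: "norm w = 1" using y0 by (simp add: w_def)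
  have wu: "w \<bullet> u = 0" using y0 by (simp add: w_def orthogonal_def inner_commute)
  define K where "K = SS u w (\<lambda>m. m)"
  define h where "h = (\<lambda>m::real. (1 - b) * t0 + b * m)"
  define e where "e = b * (1 - b) / 8"
  have "b * (1 - b) \<le> 1" using assms(3,4) by (intro mult_le_one) auto
  then have e0: "0 < e" "e \<le> 1" using assms(3,4) by (auto simp: e_def)
  have cb: "K \<in> {K. convex_body K}" using convex_body_SS[OF u w wu] by (simp add: K_def)
  obtain F where F: "\<forall>k. F k \<in> parallel_polar_comps u"
    and lim: "(\<lambda>k. ind_L1_dist (F k K) (brock u t0 b K)) \<longlonglongrightarrow> 0"
    using wa cb unfolding weakly_approximable_def by blast
  define C where "C = emeasure lborel (ball (0::'a) (e/4))"
  have C0: "0 < C" using e0 by (simp add: C_def emeasure_ball)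
  have bound: "C \<le> ind_L1_dist (F k K) (brock u t0 b K)" for k
  proof -
    obtain hs where Fk: "F k = polar_comp hs" and hs: "\<forall>(v, s)\<in>set hs. v = u \<or> v = - u"
      using F unfolding parallel_polar_comps_def by blast
    have FK: "F k K = SS u w (Gf u hs)"
      unfolding Fk K_def using polar_comp_SS[OF u wu hs, of "\<lambda>m. m"] by simp
    have BK: "brock u t0 b K = SS u w h"
      unfolding K_def h_def by (rule brock_SS[OF u wu])
    obtain m where m: "m \<in> {-1/2..1/2}" and gap: "e \<le> \<bar>Gf u hs m - h m\<bar>"
      using oneD[OF assms(3,4), of u hs t0] unfolding e_def h_def by blast
    have Lh: "\<bar>h x - h y\<bar> \<le> \<bar>x - y\<bar>" for x y
    proof -
      have "\<bar>h x - h y\<bar> = b * \<bar>x - y\<bar>"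
        using assms(3) by (simp add: h_def abs_mult flip: right_diff_distrib)
      also have "\<dots> \<le> \<bar>x - y\<bar>" using assms(3,4) by (simp add: mult_left_le_one_le)
      finally show ?thesis .
    qed
    have "\<bar>m\<bar> \<le> 1/2" using m by auto
    then obtain p where p: "ball p (e/4) \<subseteq> SS u w h - SS u w (Gf u hs)"
      using ball_sub[OF u w wu _ e0 gap Gf_lip Lh] by blast
    have "C = emeasure lebesgue (ball p (e/4))"
      using e0 by (simp add: C_def emeasure_ball)
    also have "\<dots> = (\<integral>\<^sup>+ x. indicator (ball p (e/4)) x \<partial>lebesgue)"
      by (simp add: nn_integral_indicator)
    also have "\<dots> \<le> (\<integral>\<^sup>+ x. ennreal \<bar>indicator (F k K) x - indicator (brock u t0 b K) x\<bar> \<partial>lebesgue)"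
    proof (rule nn_integral_mono)
      fix x
      show "indicator (ball p (e/4)) x \<le> ennreal \<bar>indicator (F k K) x - indicator (brock u t0 b K) x\<bar>"
        using p unfolding FK BK by (cases "x \<in> ball p (e/4)") (auto simp: indicator_def)
    qed
    finally show ?thesis unfolding ind_L1_dist_def .
  qed
  have "\<forall>\<^sub>F k in sequentially. ind_L1_dist (F k K) (brock u t0 b K) < C"
    using order_tendstoD(2)[OF lim C0] .
  then obtain N where "\<forall>k\<ge>N. ind_L1_dist (F k K) (brock u t0 b K) < C"
    unfolding eventually_sequentially by blast
  then show False using bound[of N] by (meson order.refl not_le)
qed

end
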